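(* Let $(X_t,\mathcal F_t)_{t\ge0}$ be a martingale with $X_0=0$, and assume $Y_t:=X_t-X_{t-1}\le b$ almost surely for all $t$, for some $b>0$. Let $V_T=\sum_{t=1}^T\mathbb E[Y_t^2\mid\mathcal F_{t-1}]$ and, for $\lambda\in(0,1/b)$, $M_T(\lambda)=\exp\left\{\lambda X_T-\frac{\lambda^2V_T}{1-\lambda b}\right\}$. Then for any $\mathcal F_{T-1}$-measurable $x,v>0$ and all $\lambda\in(0,1/b)$, almost surely $$\mathbb P\left(X_T\ge x\ \text{and}\ V_T\le v\,\middle|\,\mathcal F_{T-1}\right)\le M_{T-1}(\lambda)\exp\left\{-\lambda x+\frac{\lambda^2v}{1-\lambda b}\right\}.$$ *)

theory Defs
  imports "HOL-Probability.Probability"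
begin

definition discrete_filtration :: "'a measure \<Rightarrow> (nat \<Rightarrow> 'a measure) \<Rightarrow> bool" where
  "discrete_filtration M F \<longleftrightarrow>
     (\<forall>t. subalgebra M (F t)) \<and> (\<forall>s t. s \<le> t \<longrightarrow> sets (F s) \<subseteq> sets (F t))"

definition martingale :: "'a measure \<Rightarrow> (nat \<Rightarrow> 'a measure) \<Rightarrow> (nat \<Rightarrow> 'a \<Rightarrow> real) \<Rightarrow> bool" where
  "martingale M F X \<longleftrightarrow> prob_space M \<and> discrete_filtration M F \<and>
     (\<forall>t. integrable M (X t) \<and> X t \<in> borel_measurable (F t)) \<and>
     (\<forall>t. AE \<omega> in M. real_cond_exp M (F t) (X (Suc t)) \<omega> = X t \<omega>)"

definition incr :: "(nat \<Rightarrow> 'a \<Rightarrow> real) \<Rightarrow> nat \<Rightarrow> 'a \<Rightarrow> real" where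
  "incr X t \<omega> = X t \<omega> - X (t - 1) \<omega>"

text \<open>Predictable quadratic variation V_T = sum_{t=1}^T E[Y_t^2 | F_{t-1}],
  taken in [0,\<infinity>] (nonnegative conditional expectation), so that it is
  well-defined without extra integrability assumptions.\<close>
definition pqv :: "'a measure \<Rightarrow> (nat \<Rightarrow> 'a measure) \<Rightarrow> (nat \<Rightarrow> 'a \<Rightarrow> real) \<Rightarrow> nat \<Rightarrow> 'a \<Rightarrow> ennreal" where
  "pqv M F X T \<omega> = (\<Sum>t=1..T. nn_cond_exp M (F (t - 1)) (\<lambda>\<eta>. ennreal ((incr X t \<eta>)\<^sup>2)) \<omega>)"

text \<open>M_T(\<lambda>) = exp(\<lambda> X_T - \<lambda>^2 V_T / (1 - \<lambda> b)), with the natural convention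
  exp(-\<infinity>) = 0 when V_T = \<infinity>.\<close>
definition expmart :: "'a measure \<Rightarrow> (nat \<Rightarrow> 'a measure) \<Rightarrow> (nat \<Rightarrow> 'a \<Rightarrow> real) \<Rightarrow> real \<Rightarrow> real \<Rightarrow> nat \<Rightarrow> 'a \<Rightarrow> real" where
  "expmart M F X b l T \<omega> =
     (if pqv M F X T \<omega> = \<infinity> then 0
      else exp (l * X T \<omega> - l\<^sup>2 * enn2real (pqv M F X T \<omega>) / (1 - l * b)))"

end

theory Submission
  imports Defs
begin


lemma exp_le_quad:
  fixes u :: real assumes "u \<le> 1" shows "exp u \<le> 1 + u + u\<^sup>2"
proof (cases "u \<ge> 0")
  case True then show ?thesis using exp_bound[of u] assms by simp
next
  case False
  define t where "t = -u"
  have t0: "t \<ge> 0" using False t_def by simp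
  have e: "1 + t + t\<^sup>2 / 2 \<le> exp t" using exp_lower_Taylor_quadratic[OF t0] .
  have sq: "1 - t + t\<^sup>2 = (t - 1/2)\<^sup>2 + 3/4" by (simp add: power2_eq_square algebra_simps)
  have pos: "0 < 1 - t + t\<^sup>2" unfolding sq by (simp add: add_nonneg_pos)
  have "(1 + t + t\<^sup>2 / 2) * (1 - t + t\<^sup>2) = 1 + t\<^sup>2/2 + t^3/2 + t^4/2"
    by (simp add: power2_eq_square power3_eq_cube power4_eq_xxxx field_simps)
  also have "\<dots> \<ge> 1" using t0 by simp
  finally have "1 \<le> exp t * (1 - t + t\<^sup>2)"
    by (smt (verit) e mult_right_mono pos)
  then have "exp (-t) \<le> 1 - t + t\<^sup>2"
    by (simp add: exp_minus field_simps)
  then show ?thesis using t_def by simp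
qed

lemma key_pt:
  fixes y b l :: real
  assumes "y \<le> b" "0 < l" "l * b < 1" "0 < b"
  shows "exp (l*y) \<le> 1 + l*y + l\<^sup>2/(1-l*b) * y\<^sup>2"
proof -
  have "l*y \<le> l*b" using assms by simp
  moreover have "l*b < 1" using assms by simp
  ultimately have "l*y \<le> 1" by linarith
  then have "exp (l*y) \<le> 1 + l*y + (l*y)\<^sup>2" using exp_le_quad by blast
  moreover have "(l*y)\<^sup>2 \<le> l\<^sup>2/(1-l*b) * y\<^sup>2"
  proof -
    have a: "0 < 1 - l*b" "1 - l*b \<le> 1" using assms by auto
    have "(l*y)\<^sup>2 = (l\<^sup>2 * y\<^sup>2) / 1" by (simp add: power_mult_distrib)
    also have "\<dots> \<le> (l\<^sup>2 * y\<^sup>2) / (1 - l*b)"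
      using a by (intro divide_left_mono) auto
    finally show ?thesis by simp
  qed
  ultimately show ?thesis by simp
qed

lemma key_enn0:
  fixes y l c :: real
  assumes "exp (l*y) \<le> 1 + l*y + c * y\<^sup>2" "0 < l" "0 \<le> c"
  shows "ennreal (exp (l*y)) + ennreal l * ennreal (-y)
     \<le> 1 + ennreal l * ennreal y + ennreal c * ennreal (y\<^sup>2)"
proof (cases "y \<ge> 0")
  case True
  have "ennreal (exp (l*y)) \<le> ennreal (1 + l*y + c * y\<^sup>2)"
    using assms(1) by (rule ennreal_leI)
  also have "\<dots> = 1 + ennreal (l*y) + ennreal (c * y\<^sup>2)"
    using True assms by (simp add: ennreal_plus)
  also have "\<dots> = 1 + ennreal l * ennreal y + ennreal c * ennreal (y\<^sup>2)"
    using True assms by (simp add: ennreal_mult)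
  finally show ?thesis using True by (simp add: ennreal_neg)
next
  case False
  have m: "ennreal l * ennreal (-y) = ennreal (l * (-y))"
    by (rule ennreal_mult[symmetric]) (use False assms in \<open>auto simp: mult_le_0_iff\<close>)
  have "ennreal (exp (l*y)) + ennreal l * ennreal (-y) = ennreal (exp (l*y) + l * (-y))"
    unfolding m by (rule ennreal_plus[symmetric]) (use False assms in \<open>auto simp: mult_le_0_iff\<close>)
  also have "\<dots> \<le> ennreal (1 + c * y\<^sup>2)"
    using assms(1) by (intro ennreal_leI) simp
  also have "\<dots> = 1 + ennreal c * ennreal (y\<^sup>2)"
    using assms by (simp add: ennreal_mult)
  finally show ?thesis using False by (simp add: ennreal_neg)
qed

lemma key_enn:
  fixes y b l :: real
  assumes "y \<le> b" "0 < l" "l * b < 1" "0 < b"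
  shows "ennreal (exp (l*y)) + ennreal l * ennreal (-y)
     \<le> 1 + ennreal l * ennreal y + ennreal (l\<^sup>2/(1-l*b)) * ennreal (y\<^sup>2)"
  using key_enn0[OF key_pt[OF assms]] assms by simp



lemma (in sigma_finite_subalgebra) nn_cond_exp_finite:
  assumes "integrable M f"
  shows "AE x in M. nn_cond_exp M F (\<lambda>x. ennreal (f x)) x \<noteq> \<infinity>"
proof -
  have [measurable]: "f \<in> borel_measurable M" using assms by auto
  have "(\<integral>\<^sup>+ x. 1 * nn_cond_exp M F (\<lambda>x. ennreal (f x)) x \<partial>M) = (\<integral>\<^sup>+ x. 1 * ennreal (f x) \<partial>M)"
    by (rule nn_cond_exp_intg) auto
  then have "(\<integral>\<^sup>+ x. nn_cond_exp M F (\<lambda>x. ennreal (f x)) x \<partial>M) \<noteq> \<infinity>"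
    using integrableD(2)[OF assms] by simp
  then show ?thesis by (intro nn_integral_PInf_AE) auto
qed

lemma (in sigma_finite_subalgebra) nn_cond_exp_const:
  "AE x in M. nn_cond_exp M F (\<lambda>x. c) x = c"
  using nn_cond_exp_F_meas[of "\<lambda>x. c"] by (auto elim: AE_mp)



theorem lemma9:
  fixes M :: "'a measure" and F :: "nat \<Rightarrow> 'a measure" and X :: "nat \<Rightarrow> 'a \<Rightarrow> real"
    and b l :: real and T :: nat and x v :: "'a \<Rightarrow> real"
  assumes mart: "martingale M F X"
    and X0: "AE \<omega> in M. X 0 \<omega> = 0"
    and b_pos: "b > 0"
    and incr_bd: "\<And>t. t \<ge> 1 \<Longrightarrow> AE \<omega> in M. incr X t \<omega> \<le> b"
    and T_pos: "T \<ge> 1"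
    and x_meas: "x \<in> borel_measurable (F (T - 1))"
    and v_meas: "v \<in> borel_measurable (F (T - 1))"
    and x_pos: "\<And>\<omega>. \<omega> \<in> space M \<Longrightarrow> x \<omega> > 0"
    and v_pos: "\<And>\<omega>. \<omega> \<in> space M \<Longrightarrow> v \<omega> > 0"
    and l_pos: "l > 0" and l_lt: "l < 1 / b"
  shows "AE \<omega> in M.
           real_cond_exp M (F (T - 1))
             (indicator {\<eta> \<in> space M. X T \<eta> \<ge> x \<eta> \<and> pqv M F X T \<eta> \<le> ennreal (v \<eta>)}) \<omega>
         \<le> expmart M F X b l (T - 1) \<omega> * exp (- l * x \<omega> + l\<^sup>2 * v \<omega> / (1 - l * b))"
proof -
  define G where "G = F (T - 1)"
  define c where "c = l\<^sup>2 / (1 - l * b)"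
  define Y where "Y = incr X T"
  define W where "W = pqv M F X (T - 1)"
  define Q where "Q = nn_cond_exp M G (\<lambda>\<eta>. ennreal ((Y \<eta>)\<^sup>2))"
  define A where "A = {\<eta> \<in> space M. X T \<eta> \<ge> x \<eta> \<and> pqv M F X T \<eta> \<le> ennreal (v \<eta>)}"
  define K where "K = (\<lambda>\<omega>. ennreal (exp (l * X (T-1) \<omega> - l * x \<omega> + c * v \<omega>)) *
     (if W \<omega> + Q \<omega> = \<infinity> then 0 else ennreal (exp (- c * enn2real (W \<omega> + Q \<omega>)))))"
  define Z where "Z = (\<lambda>\<omega>. ennreal (exp (l * Y \<omega>)))"
  have lb: "l * b < 1" using l_lt b_pos by (simp add: field_simps)
  have c0: "c > 0" unfolding c_def using lb l_pos by auto
  have ps: "prob_space M" and filt: "discrete_filtration M F"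
    and Xint: "\<And>t. integrable M (X t)" and Xmeas: "\<And>t. X t \<in> borel_measurable (F t)"
    and Xce: "\<And>t. AE \<omega> in M. real_cond_exp M (F t) (X (Suc t)) \<omega> = X t \<omega>"
    using mart unfolding martingale_def by auto
  have subF: "\<And>t. subalgebra M (F t)" and monoF: "\<And>s t. s \<le> t \<Longrightarrow> sets (F s) \<subseteq> sets (F t)"
    using filt unfolding discrete_filtration_def by auto
  interpret prob_space M by (rule ps)
  interpret G: finite_measure_subalgebra M G
    by unfold_locales (simp add: G_def subF)
  have subG: "\<And>t. t \<le> T - 1 \<Longrightarrow> subalgebra G (F t)"
    using subF monoF unfolding subalgebra_def G_def by auto
  have [measurable]: "X (T - 1) \<in> borel_measurable G" using Xmeas G_def by simp
  have [measurable]: "x \<in> borel_measurable G" "v \<in> borel_measurable G" using x_meas v_meas G_def by auto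
  have XM [measurable]: "\<And>t. X t \<in> borel_measurable M" using Xint by auto
  have [measurable]: "Q \<in> borel_measurable G" unfolding Q_def by simp
  have [measurable]: "W \<in> borel_measurable G"
    unfolding W_def pqv_def
  proof (rule borel_measurable_sum)
    fix t assume "t \<in> {1..T-1}"
    then show "nn_cond_exp M (F (t - 1)) (\<lambda>\<eta>. ennreal ((incr X t \<eta>)\<^sup>2)) \<in> borel_measurable G"
      by (intro measurable_from_subalg[OF subG[of "t - 1"]]) auto
  qed
  have [measurable]: "K \<in> borel_measurable G" unfolding K_def by measurable
  have GM: "\<And>f. f \<in> borel_measurable G \<Longrightarrow> f \<in> borel_measurable M"
    using G.subalg measurable_from_subalg by blast
  have [measurable]: "K \<in> borel_measurable M" "W \<in> borel_measurable M" "Q \<in> borel_measurable M"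
    "x \<in> borel_measurable M" "v \<in> borel_measurable M"
    by (auto intro: GM)
  have [measurable]: "Y \<in> borel_measurable M" unfolding Y_def incr_def by measurable
  have [measurable]: "Z \<in> borel_measurable M" unfolding Z_def by measurable
  have pqvT: "\<And>\<omega>. pqv M F X T \<omega> = W \<omega> + Q \<omega>"
  proof -
    fix \<omega>
    obtain n where n: "T = Suc n" using T_pos by (cases T) auto
    show "pqv M F X T \<omega> = W \<omega> + Q \<omega>"
      unfolding pqv_def W_def Q_def G_def Y_def n by (simp add: sum.cl_ivl_Suc)
  qed
  have [measurable]: "pqv M F X T \<in> borel_measurable M" unfolding pqvT[abs_def] by measurable
  have Ameas [measurable]: "A \<in> sets M" unfolding A_def by measurable

  have ind_le: "\<And>\<omega>. \<omega> \<in> space M \<Longrightarrow> ennreal (indicator A \<omega>) \<le> K \<omega> * Z \<omega>"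
  proof -
    fix \<omega> assume \<omega>: "\<omega> \<in> space M"
    show "ennreal (indicator A \<omega>) \<le> K \<omega> * Z \<omega>"
    proof (cases "\<omega> \<in> A")
      case False then show ?thesis by simp
    next
      case True
      then have xT: "X T \<omega> \<ge> x \<omega>" and le: "W \<omega> + Q \<omega> \<le> ennreal (v \<omega>)"
        unfolding A_def pqvT by auto
      have fin: "W \<omega> + Q \<omega> \<noteq> \<infinity>"
      proof
        assume "W \<omega> + Q \<omega> = \<infinity>"
        with le show False by (simp add: top_unique)
      qed
      have s: "enn2real (W \<omega> + Q \<omega>) \<le> v \<omega>"
        using le v_pos[OF \<omega>] by (intro enn2real_leI) auto
      have "K \<omega> * Z \<omega> = ennreal (exp (l * X (T-1) \<omega> - l * x \<omega> + c * v \<omega>) * exp (- c * enn2real (W \<omega> + Q \<omega>)) * exp (l * Y \<omega>))"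
        unfolding K_def Z_def using fin by (simp add: ennreal_mult)
      also have "\<dots> = ennreal (exp (l * (X T \<omega> - x \<omega>) + c * (v \<omega> - enn2real (W \<omega> + Q \<omega>))))"
        unfolding Y_def incr_def by (simp add: exp_add[symmetric] algebra_simps)
      also have "\<dots> \<ge> 1"
        using xT s l_pos c0 by (simp add: add_nonneg_nonneg)
      finally show ?thesis using True by simp
    qed
  qed
  have Yint: "integrable M Y" unfolding Y_def incr_def using Xint by auto
  have Yeq: "Y = (\<lambda>\<eta>. X T \<eta> - X (T-1) \<eta>)" by (simp add: Y_def incr_def fun_eq_iff)
  define P where "P = nn_cond_exp M G (\<lambda>\<eta>. ennreal (Y \<eta>))"
  define N where "N = nn_cond_exp M G (\<lambda>\<eta>. ennreal (- Y \<eta>))"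
  define nn where "nn = nn_cond_exp M G"
  have rce0: "AE \<omega> in M. real_cond_exp M G Y \<omega> = 0"
  proof -
    have "AE \<omega> in M. real_cond_exp M G (\<lambda>\<eta>. X T \<eta> - X (T-1) \<eta>) \<omega> = real_cond_exp M G (X T) \<omega> - real_cond_exp M G (X (T-1)) \<omega>"
      by (rule G.real_cond_exp_diff) (auto simp: Xint)
    moreover have "AE \<omega> in M. real_cond_exp M G (X T) \<omega> = X (T-1) \<omega>"
      using Xce[of "T-1"] T_pos unfolding G_def by simp
    moreover have "AE \<omega> in M. real_cond_exp M G (X (T-1)) \<omega> = X (T-1) \<omega>"
      by (rule G.real_cond_exp_F_meas) (auto simp: Xint Xmeas G_def)
    ultimately show ?thesis unfolding Yeq by eventually_elim simp
  qed
  have mYint: "integrable M (\<lambda>\<eta>. - Y \<eta>)" using Yint by auto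
  have PN: "AE \<omega> in M. P \<omega> = N \<omega> \<and> P \<omega> \<noteq> \<infinity>"
    using rce0 G.nn_cond_exp_finite[OF Yint] G.nn_cond_exp_finite[OF mYint]
  proof eventually_elim
    case (elim \<omega>)
    then have e: "enn2real (P \<omega>) = enn2real (N \<omega>)"
      unfolding real_cond_exp_def P_def N_def by simp
    have a: "ennreal (enn2real (P \<omega>)) = P \<omega>" using elim(2) unfolding P_def by (simp add: ennreal_enn2real_if)
    have b: "ennreal (enn2real (N \<omega>)) = N \<omega>" using elim(3) unfolding N_def by (simp add: ennreal_enn2real_if)
    from a b e have "P \<omega> = N \<omega>" by metis
    with elim(2) show ?case unfolding P_def by simp
  qed
  have pt: "AE \<omega> in M. Z \<omega> + ennreal l * ennreal (- Y \<omega>) \<le> 1 + ennreal l * ennreal (Y \<omega>) + ennreal c * ennreal ((Y \<omega>)\<^sup>2)"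
    using incr_bd[OF T_pos]
  proof eventually_elim
    case (elim \<omega>)
    then show ?case unfolding Z_def c_def Y_def using key_enn[OF _ l_pos lb b_pos] by blast
  qed
  have mono: "AE \<omega> in M. nn (\<lambda>\<omega>. Z \<omega> + ennreal l * ennreal (- Y \<omega>)) \<omega> \<le> nn (\<lambda>\<omega>. 1 + ennreal l * ennreal (Y \<omega>) + ennreal c * ennreal ((Y \<omega>)\<^sup>2)) \<omega>"
    unfolding nn_def by (rule G.nn_cond_exp_mono[OF pt]) auto
  have sumL: "AE \<omega> in M. nn Z \<omega> + nn (\<lambda>\<omega>. ennreal l * ennreal (- Y \<omega>)) \<omega> = nn (\<lambda>\<omega>. Z \<omega> + ennreal l * ennreal (- Y \<omega>)) \<omega>"
    unfolding nn_def by (rule G.nn_cond_exp_sum) auto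
  have prodL: "AE \<omega> in M. ennreal l * N \<omega> = nn (\<lambda>\<omega>. ennreal l * ennreal (- Y \<omega>)) \<omega>"
    unfolding nn_def N_def by (rule G.nn_cond_exp_prod) auto
  have sumR1: "AE \<omega> in M. nn (\<lambda>\<omega>. 1 + ennreal l * ennreal (Y \<omega>)) \<omega> + nn (\<lambda>\<omega>. ennreal c * ennreal ((Y \<omega>)\<^sup>2)) \<omega> = nn (\<lambda>\<omega>. 1 + ennreal l * ennreal (Y \<omega>) + ennreal c * ennreal ((Y \<omega>)\<^sup>2)) \<omega>"
    unfolding nn_def by (rule G.nn_cond_exp_sum) auto
  have sumR2: "AE \<omega> in M. nn (\<lambda>\<omega>. 1) \<omega> + nn (\<lambda>\<omega>. ennreal l * ennreal (Y \<omega>)) \<omega> = nn (\<lambda>\<omega>. 1 + ennreal l * ennreal (Y \<omega>)) \<omega>"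
    unfolding nn_def by (rule G.nn_cond_exp_sum) auto
  have const: "AE \<omega> in M. nn (\<lambda>\<omega>. 1) \<omega> = 1"
    unfolding nn_def by (rule G.nn_cond_exp_const)
  have prodR1: "AE \<omega> in M. ennreal l * P \<omega> = nn (\<lambda>\<omega>. ennreal l * ennreal (Y \<omega>)) \<omega>"
    unfolding nn_def P_def by (rule G.nn_cond_exp_prod) auto
  have prodR2: "AE \<omega> in M. ennreal c * Q \<omega> = nn (\<lambda>\<omega>. ennreal c * ennreal ((Y \<omega>)\<^sup>2)) \<omega>"
    unfolding nn_def Q_def by (rule G.nn_cond_exp_prod) auto
  have s3: "AE \<omega> in M. nn Z \<omega> \<le> 1 + ennreal c * Q \<omega>"
    using PN mono sumL prodL sumR1 sumR2 const prodR1 prodR2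
  proof eventually_elim
    case (elim \<omega>)
    then have h: "nn Z \<omega> + ennreal l * P \<omega> \<le> 1 + ennreal l * P \<omega> + ennreal c * Q \<omega>"
      by (metis (no_types, lifting))
    have fin: "ennreal l * P \<omega> \<noteq> \<infinity>" using elim(1) by (auto simp: ennreal_mult_eq_top_iff)
    from h have "ennreal l * P \<omega> + nn Z \<omega> \<le> ennreal l * P \<omega> + (1 + ennreal c * Q \<omega>)"
      by (simp add: ac_simps)
    then show ?case using fin ennreal_add_left_cancel_le by blast
  qed
  have s1: "AE \<omega> in M. nn (\<lambda>\<omega>. ennreal (indicator A \<omega>)) \<omega> \<le> nn (\<lambda>\<omega>. K \<omega> * Z \<omega>) \<omega>"
    unfolding nn_def by (rule G.nn_cond_exp_mono) (auto intro!: AE_I2 ind_le)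
  have s2: "AE \<omega> in M. K \<omega> * nn Z \<omega> = nn (\<lambda>\<omega>. K \<omega> * Z \<omega>) \<omega>"
    unfolding nn_def by (rule G.nn_cond_exp_prod) auto
  have s4: "AE \<omega> in M. real_cond_exp M G (indicator A) \<omega> = enn2real (nn (\<lambda>\<omega>. ennreal (indicator A \<omega>)) \<omega>)"
  proof -
    have e: "(\<lambda>\<omega>. ennreal (- indicator A \<omega> :: real)) = (\<lambda>\<omega>. 0)"
      by (auto simp: fun_eq_iff ennreal_neg indicator_def)
    have "AE \<omega> in M. nn (\<lambda>\<omega>. 0) \<omega> = 0" unfolding nn_def by (rule G.nn_cond_exp_const)
    then show ?thesis unfolding real_cond_exp_def e nn_def by eventually_elim simp
  qed
  have expm0: "\<And>\<omega>. expmart M F X b l (T - 1) \<omega> \<ge> 0" unfolding expmart_def by simp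
  have "AE \<omega> in M. real_cond_exp M G (indicator A) \<omega>
         \<le> expmart M F X b l (T - 1) \<omega> * exp (- l * x \<omega> + l\<^sup>2 * v \<omega> / (1 - l * b))"
    using s1 s2 s3 s4
  proof eventually_elim
    case (elim \<omega>)
    let ?R = "expmart M F X b l (T - 1) \<omega> * exp (- l * x \<omega> + l\<^sup>2 * v \<omega> / (1 - l * b))"
    have R0: "?R \<ge> 0" using expm0 by simp
    have b1: "nn (\<lambda>\<omega>. ennreal (indicator A \<omega>)) \<omega> \<le> K \<omega> * (1 + ennreal c * Q \<omega>)"
      using elim(1,2) mult_left_mono[OF elim(3), of "K \<omega>"] by simp
    show ?case
    proof (cases "W \<omega> + Q \<omega> = \<infinity>")
      case True
      then have "nn (\<lambda>\<omega>. ennreal (indicator A \<omega>)) \<omega> = 0" using b1 unfolding K_def by simp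
      then show ?thesis using elim(4) R0 by simp
    next
      case False
      then have Wf: "W \<omega> \<noteq> \<infinity>" and Qf: "Q \<omega> \<noteq> \<infinity>" by auto
      define w where "w = enn2real (W \<omega>)"
      define q where "q = enn2real (Q \<omega>)"
      have w0: "w \<ge> 0" and q0: "q \<ge> 0" unfolding w_def q_def by auto
      have Ww: "W \<omega> = ennreal w" and Qq: "Q \<omega> = ennreal q" unfolding w_def q_def using Wf Qf
        by (auto simp: ennreal_enn2real_if)
      have wq: "enn2real (W \<omega> + Q \<omega>) = w + q" unfolding Ww Qq using w0 q0
        by (simp add: ennreal_plus[symmetric] del: ennreal_plus)
      define \<alpha> where "\<alpha> = l * X (T-1) \<omega> - l * x \<omega> + c * v \<omega>"
      have eq1: "ennreal (1 + c*q) = 1 + ennreal c * ennreal q" using c0 q0 by (simp add: ennreal_mult)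
      have Kw: "K \<omega> = ennreal (exp \<alpha> * exp (- c * (w + q)))"
        unfolding K_def \<alpha>_def using False wq by (simp add: ennreal_mult)
      have "K \<omega> * (1 + ennreal c * Q \<omega>) = ennreal (exp \<alpha> * exp (- c * (w + q))) * ennreal (1 + c * q)"
        unfolding Kw Qq eq1 ..
      also have "\<dots> = ennreal (exp \<alpha> * exp (- c * (w + q)) * (1 + c * q))"
        by (rule ennreal_mult[symmetric]) (use c0 q0 in auto)
      also have "\<dots> \<le> ennreal (exp \<alpha> * exp (- c * (w + q)) * exp (c * q))"
        by (intro ennreal_leI mult_left_mono) auto
      also have "\<dots> = ennreal (exp (\<alpha> - c * w))"
        by (simp add: exp_add[symmetric] algebra_simps)
      also have "exp (\<alpha> - c * w) = ?R"
        unfolding expmart_def W_def[symmetric] \<alpha>_def c_def using Wf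
        by (simp add: w_def[symmetric] exp_add[symmetric] field_simps)
      finally have "nn (\<lambda>\<omega>. ennreal (indicator A \<omega>)) \<omega> \<le> ennreal ?R" using b1 by simp
      then show ?thesis using elim(4) R0 by (simp add: enn2real_leI)
    qed
  qed
  then show ?thesis unfolding A_def G_def .
qed

end
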